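(* There is a functionally Hausdorff, pseudocompact, first countable semigroup topology $\theta$ on the unit circle $\mathbb T=\{z\in\mathbb C:|z|=1\}$ (as a multiplicative group) which is not a group topology.
   Context: A semigroup topology on a group is a topology making the group multiplication continuous; a group topology additionally makes inversion continuous. A space is functionally Hausdorff if continuous real-valued functions separate its points. A space is pseudocompact if every locally finite family of nonempty open subsets is finite. *)

theory Defs
  imports "HOL-Analysis.Analysis"
begin

definition circle_group :: "complex set" where
  "circle_group = {z. cmod z = 1}"

definition semigroup_topology_on :: "complex set \<Rightarrow> complex topology \<Rightarrow> bool" where
  "semigroup_topology_on G X \<longleftrightarrow>
     topspace X = G \<and>
     continuous_map (prod_topology X X) X (\<lambda>(x, y). x * y)"

definition group_topology_on :: "complex set \<Rightarrow> complex topology \<Rightarrow> bool" where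
  "group_topology_on G X \<longleftrightarrow>
     semigroup_topology_on G X \<and> continuous_map X X inverse"

definition functionally_Hausdorff :: "'a topology \<Rightarrow> bool" where
  "functionally_Hausdorff X \<longleftrightarrow>
     (\<forall>x\<in>topspace X. \<forall>y\<in>topspace X. x \<noteq> y \<longrightarrow>
        (\<exists>f. continuous_map X euclideanreal f \<and> f x \<noteq> f y))"

definition pseudocompact :: "'a topology \<Rightarrow> bool" where
  "pseudocompact X \<longleftrightarrow>
     (\<forall>\<A>. (\<forall>U\<in>\<A>. openin X U \<and> U \<noteq> {}) \<and> locally_finite_in X \<A> \<longrightarrow> finite \<A>)"

end

theory Submission
  imports Defs
begin

definition sc :: "rat \<Rightarrow> real \<Rightarrow> real" where "sc q x = real_of_rat q * x"

lemma vs_sc: "vector_space sc"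
  by unfold_locales (auto simp: sc_def algebra_simps of_rat_add of_rat_mult)

definition gprops :: "(real \<Rightarrow> real) \<Rightarrow> bool" where
  "gprops g \<longleftrightarrow> (\<forall>x y. g(x+y) = g x + g y) \<and>
     (\<forall>q x. g(of_rat q * x) = of_rat q * g x) \<and> g(2*pi) = 0 \<and> (\<exists>t0. g t0 = 1)"

lemma exists_g: "\<exists>g. gprops g"
proof -
  interpret v: vector_space sc by (rule vs_sc)
  interpret p: vector_space_pair sc sc by unfold_locales
  have ind1: "v.independent {2*pi}"
    by (simp add: v.independent_insert v.span_empty)
  have "countable (range (\<lambda>q. sc q (2*pi)))" by simp
  then obtain t0 where t0: "t0 \<notin> range (\<lambda>q. sc q (2*pi))"
    using uncountable_UNIV_real by (metis UNIV_eq_I)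
  have "t0 \<notin> v.span {2*pi}"
    using t0 by (auto simp: v.span_singleton)
  then have ind: "v.independent {t0, 2*pi}"
    using ind1 v.independent_insertI by blast
  have ne: "t0 \<noteq> 2*pi" using t0 by (metis rangeI sc_def of_rat_1 mult_1)
  obtain g where g: "Vector_Spaces.linear sc sc g" "\<forall>x\<in>{t0, 2*pi}. g x = (if x = 2*pi then 0 else 1)"
    using p.linear_independent_extend[OF ind, of "\<lambda>x. if x = 2*pi then 0 else 1"] by blast
  show ?thesis
    apply (rule exI[of _ g])
    using g ne unfolding Vector_Spaces.linear_iff sc_def gprops_def by auto
qed

definition gg :: "real \<Rightarrow> real" where "gg = (SOME g. gprops g)"

lemma gg: "gprops gg"
  unfolding gg_def using exists_g someI_ex by metis

lemma gg_add: "gg (x + y) = gg x + gg y"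
  using gg unfolding gprops_def by blast

lemma gg_rat: "gg (of_rat q * x) = of_rat q * gg x"
  using gg unfolding gprops_def by blast

lemma gg_2pi: "gg (2*pi) = 0"
  using gg unfolding gprops_def by blast

lemma gg_minus: "gg (- x) = - gg x"
  using gg_rat[of "-1" x] by (simp add: of_rat_minus)

lemma gg_int: "gg (of_int c * x) = of_int c * gg x"
  using gg_rat[of "of_int c" x] by simp

lemma dens: assumes "\<delta> > 0" shows "\<exists>s. \<bar>s - a\<bar> < \<delta> \<and> gg s = of_int c"
proof -
  obtain t0 where t0: "gg t0 = 1" using gg unfolding gprops_def by blast
  have "(a - of_int c * t0 - \<delta>) / (2*pi) < (a - of_int c * t0 + \<delta>) / (2*pi)"
    using assms by (simp add: divide_strict_right_mono)
  then obtain r where r: "r \<in> \<rat>" "(a - of_int c * t0 - \<delta>) / (2*pi) < r"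
     "r < (a - of_int c * t0 + \<delta>) / (2*pi)"
    using Rats_dense_in_real by blast
  then obtain q where q: "r = of_rat q" by (auto simp: Rats_def)
  define s where "s = of_int c * t0 + r * (2*pi)"
  have "\<bar>s - a\<bar> < \<delta>"
    using r pi_gt3 unfolding s_def by (simp add: field_simps abs_less_iff)
  moreover have "gg s = of_int c"
    unfolding s_def gg_add q gg_rat gg_int t0 gg_2pi by simp
  ultimately show ?thesis by blast
qed

definition nb :: "complex \<Rightarrow> real \<Rightarrow> complex set" where
  "nb x e = {x * cis t | t. \<bar>t\<bar> < e \<and> gg t \<ge> 0}"

definition opn :: "complex set \<Rightarrow> bool" where
  "opn U \<longleftrightarrow> U \<subseteq> circle_group \<and> (\<forall>x\<in>U. \<exists>e>0. nb x e \<subseteq> U)"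

definition th :: "complex topology" where "th = topology opn"

lemma nb_mono: assumes "e \<le> e'" shows "nb x e \<subseteq> nb x e'"
proof
  fix u assume "u \<in> nb x e"
  then obtain t where "u = x * cis t" "\<bar>t\<bar> < e" "gg t \<ge> 0" unfolding nb_def by blast
  moreover have "\<bar>t\<bar> < e'" using assms \<open>\<bar>t\<bar> < e\<close> by linarith
  ultimately show "u \<in> nb x e'" unfolding nb_def by blast
qed

lemma gg_0: "gg 0 = 0"
  using gg_add[of 0 0] by simp

lemma istop: "istopology opn"
  unfolding istopology_def
proof (intro conjI allI impI ballI)
  fix S T assume S: "opn S" and T: "opn T"
  show "opn (S \<inter> T)" unfolding opn_def
  proof (intro conjI ballI)
    show "S \<inter> T \<subseteq> circle_group" using S unfolding opn_def by blast
    fix x assume x: "x \<in> S \<inter> T"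
    obtain e1 where e1: "e1 > 0" "nb x e1 \<subseteq> S" using S x unfolding opn_def by blast
    obtain e2 where e2: "e2 > 0" "nb x e2 \<subseteq> T" using T x unfolding opn_def by blast
    have "nb x (min e1 e2) \<subseteq> S"
      using nb_mono[of "min e1 e2" e1 x] e1(2) by (simp add: order_trans)
    moreover have "nb x (min e1 e2) \<subseteq> T"
      using nb_mono[of "min e1 e2" e2 x] e2(2) by (simp add: order_trans)
    ultimately have "nb x (min e1 e2) \<subseteq> S \<inter> T" by (rule Int_greatest)
    moreover have "min e1 e2 > 0" using e1 e2 by simp
    ultimately show "\<exists>e>0. nb x e \<subseteq> S \<inter> T" by blast
  qed
next
  fix K assume K: "\<forall>K\<in>K. opn K"
  show "opn (\<Union>K)" unfolding opn_def
  proof (intro conjI ballI)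
    show "\<Union>K \<subseteq> circle_group" using K unfolding opn_def by blast
    fix x assume "x \<in> \<Union>K"
    then obtain k where k: "k \<in> K" "x \<in> k" by blast
    then obtain e where "e > 0" "nb x e \<subseteq> k" using K unfolding opn_def by blast
    then show "\<exists>e>0. nb x e \<subseteq> \<Union>K" using k by blast
  qed
qed

lemma openin_th: "openin th U \<longleftrightarrow> opn U"
  unfolding th_def topology_inverse'[OF istop] ..

lemma circ_mult: "x \<in> circle_group \<Longrightarrow> y \<in> circle_group \<Longrightarrow> x * y \<in> circle_group"
  by (simp add: circle_group_def norm_mult)

lemma cis_circ: "cis t \<in> circle_group"
  by (simp add: circle_group_def)

lemma nb_sub: "x \<in> circle_group \<Longrightarrow> nb x e \<subseteq> circle_group"
  unfolding nb_def using circ_mult cis_circ by blast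

lemma in_nb: "e > 0 \<Longrightarrow> x \<in> nb x e"
proof -
  assume "e > 0"
  moreover have "x = x * cis 0" by simp
  ultimately show ?thesis unfolding nb_def using gg_0 by fastforce
qed

lemma nb_open: assumes x: "x \<in> circle_group" shows "openin th (nb x e)"
  unfolding openin_th opn_def
proof safe
  show "y \<in> circle_group" if "y \<in> nb x e" for y using nb_sub[OF x] that by blast
  fix y assume "y \<in> nb x e"
  then obtain t where t: "y = x * cis t" "\<bar>t\<bar> < e" "gg t \<ge> 0" unfolding nb_def by blast
  have sub: "nb y (e - \<bar>t\<bar>) \<subseteq> nb x e"
  proof
    fix w assume "w \<in> nb y (e - \<bar>t\<bar>)"
    then obtain t' where t': "w = y * cis t'" "\<bar>t'\<bar> < e - \<bar>t\<bar>" "gg t' \<ge> 0" unfolding nb_def by blast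
    have "w = x * cis (t + t')" using t t' by (simp add: cis_mult[symmetric] mult.assoc)
    moreover have "\<bar>t + t'\<bar> < e" "gg (t + t') \<ge> 0" using t t' by (auto simp: gg_add)
    ultimately show "w \<in> nb x e" unfolding nb_def by blast
  qed
  have pos: "e - \<bar>t\<bar> > 0" using t by simp
  show "\<exists>e'>0. nb y e' \<subseteq> nb x e"
    by (rule exI[of _ "e - \<bar>t\<bar>"], rule conjI[OF pos sub])
qed

lemma topspace_th: "topspace th = circle_group"
proof -
  have "opn circle_group" unfolding opn_def
  proof (intro conjI ballI subset_refl)
    fix x assume "x \<in> circle_group"
    then show "\<exists>e>0. nb x e \<subseteq> circle_group" using nb_sub[of x 1] by (intro exI[of _ 1]) simp
  qed
  then have "circle_group \<subseteq> topspace th" using openin_th[of circle_group] openin_subset[of th circle_group] by simp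
  moreover have "topspace th \<subseteq> circle_group" using openin_th[of "topspace th"] unfolding opn_def by simp
  ultimately show ?thesis by blast
qed

lemma mult_cont: "continuous_map (prod_topology th th) th (\<lambda>(x, y). x * y)"
  unfolding continuous_map_def topspace_prod_topology topspace_th
proof (intro conjI allI impI)
  show "(\<lambda>(x, y). x * y) \<in> circle_group \<times> circle_group \<rightarrow> circle_group"
    using circ_mult by auto
  fix U assume U: "openin th U"
  let ?W = "{z \<in> circle_group \<times> circle_group. (\<lambda>(x, y). x * y) z \<in> U}"
  show "openin (prod_topology th th) ?W"
  proof (subst openin_subopen, intro ballI)
    fix z assume z: "z \<in> ?W"
    obtain x y where xy: "z = (x, y)" by (cases z)
    have x: "x \<in> circle_group" and y: "y \<in> circle_group" and xyU: "x * y \<in> U"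
      using z xy by auto
    obtain e where e: "e > 0" "nb (x * y) e \<subseteq> U" using U xyU unfolding openin_th opn_def by blast
    have op: "openin (prod_topology th th) (nb x (e/2) \<times> nb y (e/2))"
      using nb_open[OF x] nb_open[OF y] by (simp add: openin_prod_Times_iff)
    have zin: "z \<in> nb x (e/2) \<times> nb y (e/2)" using xy in_nb e by simp
    have "nb x (e/2) \<times> nb y (e/2) \<subseteq> ?W"
    proof
      fix p assume "p \<in> nb x (e/2) \<times> nb y (e/2)"
      then obtain a b where p: "p = (a, b)" and a: "a \<in> nb x (e/2)" and b: "b \<in> nb y (e/2)" by blast
      obtain s where s: "a = x * cis s" "\<bar>s\<bar> < e/2" "gg s \<ge> 0" using a unfolding nb_def by blast
      obtain t where t: "b = y * cis t" "\<bar>t\<bar> < e/2" "gg t \<ge> 0" using b unfolding nb_def by blast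
      have "a * b = (x * y) * cis (s + t)" using s t by (simp add: cis_mult[symmetric] mult_ac)
      moreover have "\<bar>s + t\<bar> < e" "gg (s + t) \<ge> 0" using s t by (auto simp: gg_add)
      ultimately have "a * b \<in> nb (x * y) e" unfolding nb_def by blast
      then have "a * b \<in> U" using e by blast
      moreover have "a \<in> circle_group" "b \<in> circle_group" using a b nb_sub[OF x] nb_sub[OF y] by blast+
      ultimately show "p \<in> ?W" using p by simp
    qed
    then show "\<exists>T. openin (prod_topology th th) T \<and> z \<in> T \<and> T \<subseteq> ?W"
      using op zin by blast
  qed
qed

lemma cis_small: assumes "r > 0" shows "\<exists>d>0. \<forall>t. \<bar>t\<bar> < d \<longrightarrow> cmod (cis t - 1) < r"
proof -
  have "continuous_on UNIV (\<lambda>t. cis t)"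
    by (intro continuous_on_cis continuous_on_id)
  then have "isCont cis 0" using continuous_on_eq_continuous_at[of UNIV] by auto
  then have "cis \<midarrow>0\<rightarrow> 1" unfolding isCont_def by simp
  then obtain d where d: "d > 0" "\<forall>x. x \<noteq> 0 \<and> norm (x - 0) < d \<longrightarrow> norm (cis x - 1) < r"
    using assms unfolding LIM_eq by blast
  have "\<forall>t. \<bar>t\<bar> < d \<longrightarrow> cmod (cis t - 1) < r"
  proof (intro allI impI)
    fix t :: real assume "\<bar>t\<bar> < d"
    then show "cmod (cis t - 1) < r" using d assms by (cases "t = 0") auto
  qed
  then show ?thesis using d by blast
qed

lemma eucl_open: assumes "open S0" shows "openin th (circle_group \<inter> S0)"
  unfolding openin_th opn_def
proof (intro conjI ballI)
  show "circle_group \<inter> S0 \<subseteq> circle_group" by blast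
  fix x assume x: "x \<in> circle_group \<inter> S0"
  obtain r where r: "r > 0" "ball x r \<subseteq> S0" using assms x open_contains_ball by blast
  obtain d where d: "d > 0" "\<forall>t. \<bar>t\<bar> < d \<longrightarrow> cmod (cis t - 1) < r" using cis_small[OF r(1)] by blast
  have "nb x d \<subseteq> circle_group \<inter> S0"
  proof
    fix w assume w: "w \<in> nb x d"
    then obtain t where t: "w = x * cis t" "\<bar>t\<bar> < d" unfolding nb_def by blast
    have nx: "cmod x = 1" using x by (simp add: circle_group_def)
    have "dist x w = cmod (x * (cis t - 1))" using t by (simp add: dist_norm algebra_simps norm_minus_commute)
    also have "\<dots> = cmod (cis t - 1)" by (simp add: norm_mult nx)
    also have "\<dots> < r" using d t by blast
    finally have "w \<in> S0" using r by auto
    moreover have "w \<in> circle_group" using w nb_sub x by blast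
    ultimately show "w \<in> circle_group \<inter> S0" by blast
  qed
  then show "\<exists>e>0. nb x e \<subseteq> circle_group \<inter> S0" using d by blast
qed

lemma cmap: assumes "continuous_on UNIV h" shows "continuous_map th euclideanreal h"
  unfolding continuous_map_def topspace_th
proof (intro conjI allI impI)
  show "h \<in> circle_group \<rightarrow> topspace euclideanreal" by simp
  fix V assume "openin euclideanreal V"
  then have "open V" by simp
  then have "open (h -` V)" using assms continuous_on_open_vimage[of UNIV h] by simp
  then have "openin th (circle_group \<inter> h -` V)" by (rule eucl_open)
  moreover have "{x \<in> circle_group. h x \<in> V} = circle_group \<inter> h -` V" by blast
  ultimately show "openin th {x \<in> circle_group. h x \<in> V}" by simp
qed

lemma fH: "functionally_Hausdorff th"
  unfolding functionally_Hausdorff_def topspace_th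
proof (intro ballI impI)
  fix x y :: complex assume "x \<noteq> y"
  have "continuous_on UNIV (\<lambda>z. cmod (z - x))" by (intro continuous_intros)
  then have "continuous_map th euclideanreal (\<lambda>z. cmod (z - x))" by (rule cmap)
  moreover have "cmod (x - x) \<noteq> cmod (y - x)" using \<open>x \<noteq> y\<close> by simp
  ultimately show "\<exists>f. continuous_map th euclideanreal f \<and> f x \<noteq> f y" by blast
qed

lemma fc: "first_countable th"
  unfolding first_countable_def topspace_th
proof (intro ballI)
  fix x assume x: "x \<in> circle_group"
  let ?B = "range (\<lambda>n::nat. nb x (1 / real (Suc n)))"
  have "\<forall>U. openin th U \<and> x \<in> U \<longrightarrow> (\<exists>V\<in>?B. x \<in> V \<and> V \<subseteq> U)"
  proof (intro allI impI)
    fix U assume U: "openin th U \<and> x \<in> U"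
    obtain e where e: "e > 0" "nb x e \<subseteq> U" using U unfolding openin_th opn_def by blast
    obtain n where n: "inverse (real (Suc n)) < e" using reals_Archimedean[OF e(1)] by blast
    have "nb x (1 / real (Suc n)) \<subseteq> U" using nb_mono[of "1 / real (Suc n)" e x] n e
      by (simp add: inverse_eq_divide)
    moreover have "x \<in> nb x (1 / real (Suc n))" by (rule in_nb) simp
    ultimately show "\<exists>V\<in>?B. x \<in> V \<and> V \<subseteq> U" by blast
  qed
  moreover have "\<forall>V\<in>?B. openin th V" using nb_open[OF x] by blast
  moreover have "countable ?B" by simp
  ultimately show "\<exists>\<B>. countable \<B> \<and> (\<forall>V\<in>\<B>. openin th V) \<and>
             (\<forall>U. openin th U \<and> x \<in> U \<longrightarrow> (\<exists>V\<in>\<B>. x \<in> V \<and> V \<subseteq> U))" by blast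
qed

lemma not_inv_cont: "\<not> continuous_map th th inverse"
proof
  assume cm: "continuous_map th th inverse"
  have one: "(1::complex) \<in> circle_group" by (simp add: circle_group_def)
  have "openin th {z \<in> topspace th. inverse z \<in> nb 1 1}"
    using cm nb_open[OF one] unfolding continuous_map_def by blast
  moreover have "1 \<in> {z \<in> topspace th. inverse z \<in> nb 1 1}"
    using one in_nb[of 1 1] topspace_th by simp
  ultimately obtain e where e: "e > 0" "nb 1 e \<subseteq> {z \<in> topspace th. inverse z \<in> nb 1 1}"
    unfolding openin_th opn_def by blast
  obtain s where s: "\<bar>s - 0\<bar> < min e 1" "gg s = of_int 1"
    using dens[of "min e 1" 0 1] e by auto
  have "cis s \<in> nb 1 e" unfolding nb_def using s by fastforce
  then have "inverse (cis s) \<in> nb 1 1" using e by blast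
  then obtain t where t: "cis (- s) = cis t" "\<bar>t\<bar> < 1" "gg t \<ge> 0"
    unfolding nb_def by auto
  have "cis (t + s) = cis t * cis s" by (simp add: cis_mult)
  also have "\<dots> = cis (-s) * cis s" using t by simp
  also have "\<dots> = 1" by (simp add: cis_mult)
  finally have "exp (\<i> * complex_of_real (t + s)) = 1" by (simp add: cis_conv_exp)
  then obtain n :: int where n: "t + s = of_int (2 * n) * pi" by (auto simp: exp_eq_1)
  have lt: "\<bar>t + s\<bar> < 2" using s t by auto
  have "n = 0"
  proof (rule ccontr)
    assume "n \<noteq> 0"
    then have "\<bar>real_of_int n\<bar> \<ge> 1" by linarith
    then have "\<bar>of_int (2 * n) * pi\<bar> \<ge> 2 * pi" by (simp add: abs_mult)
    then show False using lt n pi_gt3 by linarith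
  qed
  then have "t = - s" using n by simp
  then have "gg t = -1" using s gg_minus by simp
  then show False using t by simp
qed

lemma keyK:
  assumes z: "z \<in> circle_group" and d: "d > 0" and a: "\<bar>a\<bar> < d/2"
    and U: "openin th U" and zU: "z * cis a \<in> U"
  shows "U \<inter> nb z d \<noteq> {}"
proof -
  obtain e where e: "e > 0" "nb (z * cis a) e \<subseteq> U" using U zU unfolding openin_th opn_def by blast
  obtain s where s: "\<bar>s - 0\<bar> < min e (d/2)" "gg s = of_int \<lceil>\<bar>gg a\<bar>\<rceil>"
    using dens[of "min e (d/2)" 0 "\<lceil>\<bar>gg a\<bar>\<rceil>"] e d by auto
  have c1: "gg s \<ge> 0" "gg s \<ge> - gg a" using s(2)
    by (metis abs_ge_zero ceiling_le_zero le_of_int_ceiling not_le order_trans abs_ge_minus_self)+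
  define w where "w = z * cis a * cis s"
  have "w \<in> nb (z * cis a) e" unfolding nb_def w_def using s c1 by fastforce
  then have "w \<in> U" using e by blast
  moreover have "w = z * cis (a + s)" unfolding w_def by (simp add: cis_mult[symmetric] mult.assoc)
  then have "w \<in> nb z d" unfolding nb_def using s a c1 by (force simp: gg_add)
  ultimately show ?thesis by blast
qed

lemma pc: "pseudocompact th"
  unfolding pseudocompact_def
proof (intro allI impI, elim conjE)
  fix \<A> assume opA: "\<forall>U\<in>\<A>. openin th U \<and> U \<noteq> {}" and lf: "locally_finite_in th \<A>"
  have loc: "\<forall>u. \<exists>d. d > 0 \<and> finite {U \<in> \<A>. U \<inter> nb (cis u) d \<noteq> {}}"
  proof
    fix u
    have "cis u \<in> topspace th" using topspace_th cis_circ by simp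
    then obtain V where V: "openin th V" "cis u \<in> V" "finite {U \<in> \<A>. U \<inter> V \<noteq> {}}"
      using lf unfolding locally_finite_in_def by blast
    obtain d where d: "d > 0" "nb (cis u) d \<subseteq> V" using V unfolding openin_th opn_def by blast
    have "{U \<in> \<A>. U \<inter> nb (cis u) d \<noteq> {}} \<subseteq> {U \<in> \<A>. U \<inter> V \<noteq> {}}" using d by blast
    then show "\<exists>d. d > 0 \<and> finite {U \<in> \<A>. U \<inter> nb (cis u) d \<noteq> {}}"
      using d V finite_subset by blast
  qed
  then obtain D where D: "\<forall>u. D u > 0 \<and> finite {U \<in> \<A>. U \<inter> nb (cis u) (D u) \<noteq> {}}"
    unfolding choice_iff by blast
  have "compact {-pi..pi}" by simp
  moreover have "\<And>u. u \<in> {-pi..pi} \<Longrightarrow> open (ball u (D u / 2))" by simp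
  moreover have "{-pi..pi} \<subseteq> (\<Union>u\<in>{-pi..pi}. ball u (D u / 2))"
  proof
    fix u assume "u \<in> {-pi..pi}"
    moreover have "u \<in> ball u (D u / 2)" using D by simp
    ultimately show "u \<in> (\<Union>u\<in>{-pi..pi}. ball u (D u / 2))" by blast
  qed
  ultimately obtain K where K: "K \<subseteq> {-pi..pi}" "finite K" "{-pi..pi} \<subseteq> (\<Union>u\<in>K. ball u (D u / 2))"
    by (rule compactE_image)
  have "\<A> \<subseteq> (\<Union>u\<in>K. {U \<in> \<A>. U \<inter> nb (cis u) (D u) \<noteq> {}})"
  proof
    fix U assume U: "U \<in> \<A>"
    then obtain y where y: "y \<in> U" using opA by blast
    have "y \<in> circle_group" using U y opA openin_subset topspace_th by blast
    then have ny: "cmod y = 1" by (simp add: circle_group_def)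
    then have "y \<noteq> 0" by auto
    then have cy: "cis (Arg y) = y" using cis_Arg ny by (simp add: sgn_div_norm)
    have "Arg y \<in> {-pi..pi}" using Arg_bounded[of y] by auto
    then obtain u where u: "u \<in> K" "Arg y \<in> ball u (D u / 2)" using K by blast
    define a where "a = Arg y - u"
    have a: "\<bar>a\<bar> < D u / 2" using u unfolding a_def by (simp add: dist_real_def abs_minus_commute)
    have "cis u * cis a = y" unfolding a_def using cy by (simp add: cis_mult)
    then have "U \<inter> nb (cis u) (D u) \<noteq> {}"
      using keyK[OF cis_circ _ a, of U] D opA U y by auto
    then show "U \<in> (\<Union>u\<in>K. {U \<in> \<A>. U \<inter> nb (cis u) (D u) \<noteq> {}})" using u U by blast
  qed
  moreover have "finite (\<Union>u\<in>K. {U \<in> \<A>. U \<inter> nb (cis u) (D u) \<noteq> {}})"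
    using K(2) D by blast
  ultimately show "finite \<A>" by (rule finite_subset)
qed

theorem proposition7:
  shows "\<exists>\<theta> :: complex topology.
           semigroup_topology_on circle_group \<theta> \<and>
           functionally_Hausdorff \<theta> \<and> pseudocompact \<theta> \<and> first_countable \<theta> \<and>
           \<not> group_topology_on circle_group \<theta>"
  apply (rule exI[of _ th])
  using mult_cont topspace_th fH pc fc not_inv_cont
  unfolding semigroup_topology_on_def group_topology_on_def by blast

end
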